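(* Let $T$ be a basic maximal rigid object of $\mathcal{C}_n$ with top summand $T_1=(1,n-1)$, and let $X,Y\in\mathcal{F}$ with $X,Y\notin\operatorname{add}\tau T$. If $\sigma^{\mathcal{T}}_X=\sigma^{\mathcal{T}}_Y$ and $\sigma^{\mathcal{D}}_X=\sigma^{\mathcal{D}}_Y$, then $X=Y$.
   Context: Let $k$ be algebraically closed, $n\ge2$, $\mathcal{T}_n$ the tube of rank $n$ (finite-dimensional nilpotent representations of the cyclically oriented $\tilde A_{n-1}$-quiver; AR-translation $\tau$), $\mathcal{C}_n=D^b(\mathcal{T}_n)/\tau^{-1}[1]$ the cluster tube, with indecomposables identified with those of $\mathcal{T}_n$. Indecomposables have coordinates $(a,b)$, $a\in\mathbb{Z}/n$ (represented in $\{1,\dots,n\}$), $b\ge1$ the quasilength, with $\tau(a,b)=(a-1,b)$ and irreducible maps $(a,b)\to(a,b+1)$, $(a,b)\to(a+1,b-1)$. For indecomposables $X,Y$, $\operatorname{Hom}_{\mathcal{C}_n}(X,Y)=\operatorname{Hom}_{\mathcal{T}_n}(X,Y)\oplus\operatorname{Hom}_{D^b}(X,\tau^{-1}Y[1])$; elements of the first summand are $\mathcal{T}$-maps, of the second $\mathcal{D}$-maps. $R^{\mathcal{T}}(X)$ (resp. $R^{\mathcal{D}}(X)$) is the set of indecomposables with a nonzero $\mathcal{T}$-map (resp. $\mathcal{D}$-map) to $X$. Wing of $X=(a,i)$, $i\le n-1$: $\{(a+s,i'):s\ge0,i'\ge1,s+i'\le i\}$. $T=\bigoplus_{i=1}^{n-1}T_i$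 is basic maximal rigid ($\operatorname{Ext}^1(T,T)=0$ and $\operatorname{Ext}^1(T\oplus Z,T\oplus Z)=0\Rightarrow Z\in\operatorname{add}T$); its unique summand of quasilength $n-1$ (top summand) is, by choice of coordinates, $T_1=(1,n-1)$. $\mathcal{F}$ is the set of indecomposables $(a,b)$, $a\in\{1,\dots,n\}$, with $b\le n-1$ or $a+b\le2n-1$. The quiver of $\Lambda_T=\operatorname{End}_{\mathcal{C}_n}(T)^{\mathrm{op}}$ has a vertex for each $T_i$ and arrows $i\to j$ for maps $T_j\to T_i$ irreducible in $\operatorname{add}T$. A string is a trivial string at a vertex, or a word in arrows and formal inverses with matching endpoints, no letter followed by its inverse, and no subword of it or its inverse a zero relation of $\Lambda_T$. For $*\in\{\mathcal{T},\mathcal{D}\}$: if $R^*(X)\cap\operatorname{add}T\neq\emptyset$, $\sigma^*_X$ denotes the unique string that traverses exactly the vertices of the summands of $T$ in $R^*(X)$, each exactly once, and ends at the vertex of the one of highest quasilength; otherwise $\sigma^*_X$ is the zero string. *)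

theory Defs
  imports Main "HOL-Number_Theory.Cong"
begin

text \<open>An indecomposable is a pair
(a,b) with 1 <= a <= n (a representative of Z/n) and quasilength b >= 1.
The indecomposable (a,b) is the uniserial object with quasi-socle (a,1) and
quasi-composition factors (a,1),(a+1,1),...,(a+b-1,1) (indices mod n).\<close>

type_synonym ind = "int \<times> int"

definition ind_objs :: "int \<Rightarrow> ind set" where
  "ind_objs n = {(a, b). 1 \<le> a \<and> a \<le> n \<and> 1 \<le> b}"

text \<open>AR translation: tau (a,b) = (a-1,b), with a taken mod n in {1..n}.\<close>
definition tau :: "int \<Rightarrow> ind \<Rightarrow> ind" where
  "tau n X = (((fst X - 2) mod n) + 1, snd X)"

text \<open>Nonzero T-map (in the tube) from X=(a,b) to Y=(c,d): some nonzero quotient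
(a+s,b-s) of X (0 <= s < b) is isomorphic to a subobject (c,t), t <= d, of Y.\<close>
definition homT :: "int \<Rightarrow> ind \<Rightarrow> ind \<Rightarrow> bool" where
  "homT n X Y \<longleftrightarrow> (\<exists>s::int. 0 \<le> s \<and> s < snd X \<and> [fst X + s = fst Y] (mod n)
                         \<and> snd X - s \<le> snd Y)"

text \<open>Nonzero D-map X -> Y: Hom_D(X, tau^-1 Y[1]) = Ext^1_T(X, tau^-1 Y)
 = D Hom_T(tau^-1 Y, tau X) = D Hom_T(Y, tau^2 X).\<close>
definition homD :: "int \<Rightarrow> ind \<Rightarrow> ind \<Rightarrow> bool" where
  "homD n X Y \<longleftrightarrow> homT n Y (tau n (tau n X))"

text \<open>Ext^1 in C_n: Ext^1_C(X,Y) = Hom_C(X,Y[1]) = Hom_C(X,tau Y), since [1] = tau in C_n.\<close>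
definition ext1C :: "int \<Rightarrow> ind \<Rightarrow> ind \<Rightarrow> bool" where
  "ext1C n X Y \<longleftrightarrow> homT n X (tau n Y) \<or> homD n X (tau n Y)"

text \<open>A basic object is given by its (finite) set of indecomposable summands.\<close>
definition rigid :: "int \<Rightarrow> ind set \<Rightarrow> bool" where
  "rigid n S \<longleftrightarrow> (\<forall>X\<in>S. \<forall>Y\<in>S. \<not> ext1C n X Y)"

definition basic_maximal_rigid :: "int \<Rightarrow> ind set \<Rightarrow> bool" where
  "basic_maximal_rigid n T \<longleftrightarrow> T \<subseteq> ind_objs n \<and> finite T \<and> rigid n T \<and>
     (\<forall>Z\<in>ind_objs n. rigid n (insert Z T) \<longrightarrow> Z \<in> T)"

definition F_objs :: "int \<Rightarrow> ind set" where
  "F_objs n = {(a, b) \<in> ind_objs n. b \<le> n - 1 \<or> a + b \<le> 2 * n - 1}"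

definition RT :: "int \<Rightarrow> ind \<Rightarrow> ind set" where
  "RT n X = {Z \<in> ind_objs n. homT n Z X}"

definition RD :: "int \<Rightarrow> ind \<Rightarrow> ind set" where
  "RD n X = {Z \<in> ind_objs n. homD n Z X}"

text \<open>The string sigma^*_X is, by definition, the unique string traversing exactly
the vertices of the summands of T in R^*(X) (each once) and ending at the one of
highest quasilength, or the zero string if there are none.  Hence sigma^*_X is
determined by, and determines, the vertex set below.\<close>
definition sigma_vertices :: "ind set \<Rightarrow> (int \<Rightarrow> ind \<Rightarrow> ind set) \<Rightarrow> int \<Rightarrow> ind \<Rightarrow> ind set" where
  "sigma_vertices T R n X = R n X \<inter> T"

end

theory Submission
  imports Defs "HOL-Number_Theory.Cong"
begin

definition RTm :: "int \<Rightarrow> int \<Rightarrow> int \<Rightarrow> int \<Rightarrow> bool" where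
  "RTm a e x y \<longleftrightarrow> x \<le> a \<and> a \<le> y \<and> y \<le> e"
definition RDm :: "int \<Rightarrow> int \<Rightarrow> int \<Rightarrow> int \<Rightarrow> int \<Rightarrow> bool" where
  "RDm n a e x y \<longleftrightarrow> (a \<le> x-2 \<and> x-2 \<le> e \<and> e \<le> y-2) \<or> (a \<le> x-2+n \<and> x-2+n \<le> e \<and> e \<le> y-2+n)"

locale tr =
  fixes n :: int and inT :: "int \<Rightarrow> int \<Rightarrow> bool"
  assumes n2: "n \<ge> 2"
  and H1: "inT x y \<Longrightarrow> 1 \<le> x \<and> x \<le> y \<and> y \<le> n-1"
  and H2: "inT x y \<Longrightarrow> inT x' y' \<Longrightarrow> \<not> (x < x' \<and> x' \<le> y+1 \<and> y+1 \<le> y')"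
  and H3: "\<lbrakk>1 \<le> x; x \<le> y; y \<le> n-1; \<And>x' y'. inT x' y' \<Longrightarrow> \<not>(x < x' \<and> x' \<le> y+1 \<and> y+1 \<le> y') \<and> \<not>(x' < x \<and> x \<le> y'+1 \<and> y'+1 \<le> y)\<rbrakk> \<Longrightarrow> inT x y"
  and H4: "inT 1 (n-1)"
begin

lemma node:
  assumes p: "1 \<le> p" "p \<le> n-1"
  obtains l r where "inT l r" "l \<le> p" "p \<le> r" "l < p \<Longrightarrow> inT l (p-1)" "p < r \<Longrightarrow> inT (p+1) r"
    "\<And>x y. inT x y \<Longrightarrow> x \<le> p \<Longrightarrow> p \<le> y \<Longrightarrow> x \<le> l \<and> r \<le> y"
proof -
  define P where "P k \<longleftrightarrow> (\<exists>x y. inT x y \<and> x \<le> p \<and> p \<le> y \<and> nat (y-x) = k)" for k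
  have "P (nat (n-1-1))" unfolding P_def using H4 p by (intro exI[of _ 1] exI[of _ "n-1"]) auto
  hence "P (LEAST k. P k)" by (rule LeastI)
  then obtain l r where lr: "inT l r" "l \<le> p" "p \<le> r" "nat (r-l) = (LEAST k. P k)"
    unfolding P_def by blast
  have mn: "x \<le> l \<and> r \<le> y" if xy: "inT x y" "x \<le> p" "p \<le> y" for x y
  proof (rule ccontr)
    assume c: "\<not> (x \<le> l \<and> r \<le> y)"
    have a1: "\<not> (x < l \<and> l \<le> y+1 \<and> y+1 \<le> r)" using H2[OF xy(1) lr(1)] .
    have a2: "\<not> (l < x \<and> x \<le> r+1 \<and> r+1 \<le> y)" using H2[OF lr(1) xy(1)] .
    have "nat (y-x) < nat (r-l)" using a1 a2 c xy lr by auto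
    moreover have "P (nat (y-x))" unfolding P_def using xy by blast
    ultimately show False using lr(4) not_less_Least by metis
  qed
  show ?thesis
  proof (rule that[OF lr(1-3)])
    assume "l < p"
    show "inT l (p-1)"
    proof (rule H3)
      show "1 \<le> l" using H1[OF lr(1)] by simp
      show "l \<le> p-1" using \<open>l < p\<close> by simp
      show "p-1 \<le> n-1" using p by simp
      fix x' y' assume h: "inT x' y'"
      show "\<not>(l < x' \<and> x' \<le> p-1+1 \<and> p-1+1 \<le> y') \<and> \<not>(x' < l \<and> l \<le> y'+1 \<and> y'+1 \<le> p-1)"
        using mn[OF h] H2[OF h lr(1)] lr by auto
    qed
  next
    assume "p < r"
    show "inT (p+1) r"
    proof (rule H3)
      show "1 \<le> p+1" using p by simp
      show "p+1 \<le> r" using \<open>p < r\<close> by simp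
      show "r \<le> n-1" using H1[OF lr(1)] by simp
      fix x' y' assume h: "inT x' y'"
      show "\<not>(p+1 < x' \<and> x' \<le> r+1 \<and> r+1 \<le> y') \<and> \<not>(x' < p+1 \<and> p+1 \<le> y'+1 \<and> y'+1 \<le> r)"
        using mn[OF h] H2[OF lr(1) h] lr by auto
    qed
  next
    fix x y assume "inT x y" "x \<le> p" "p \<le> y" thus "x \<le> l \<and> r \<le> y" by (rule mn)
  qed
qed

definition valid :: "int \<Rightarrow> int \<Rightarrow> bool" where
  "valid a e \<longleftrightarrow> 1 \<le> a \<and> a \<le> n \<and> a \<le> e \<and> e \<le> 2*n-2 \<and> (a \<le> n-1 \<longrightarrow> \<not> inT (a+1) (e+1)) \<and> (a = n \<longrightarrow> \<not> inT 1 (e+1-n))"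

lemma nonempty:
  assumes v: "valid a e"
  shows "\<exists>x y. inT x y \<and> (RTm a e x y \<or> RDm n a e x y)"
proof (cases "a \<le> n-1")
  case True
  have a1: "1 \<le> a" using v unfolding valid_def by simp
  obtain l r where lr: "inT l r" "l \<le> a" "a \<le> r" "a < r \<Longrightarrow> inT (a+1) r"
    "\<And>x y. inT x y \<Longrightarrow> x \<le> a \<Longrightarrow> a \<le> y \<Longrightarrow> x \<le> l \<and> r \<le> y"
    using node[OF a1 True] by metis
  show ?thesis
  proof (cases "r \<le> e")
    case True thus ?thesis using lr unfolding RTm_def by blast
  next
    case False
    have "r \<noteq> e+1"
    proof
      assume re: "r = e+1"
      have "a < r" using re v unfolding valid_def by simp
      hence "inT (a+1) r" by (rule lr(4))
      hence "inT (a+1) (e+1)" using re by simp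
      thus False using v True unfolding valid_def by simp
    qed
    hence r2: "r \<ge> e+2" using False by simp
    have rr: "r \<le> n-1" using H1[OF lr(1)] by simp
    have "1 \<le> e+2" "e+2 \<le> n-1" using v r2 rr unfolding valid_def by auto
    then obtain l2 r2 where q: "inT l2 r2" "l2 \<le> e+2" "e+2 \<le> r2" "l2 < e+2 \<Longrightarrow> inT l2 (e+2-1)"
      using node by metis
    show ?thesis
    proof (cases "l2 \<ge> a+2")
      case True
      thus ?thesis using q r2 rr unfolding RDm_def by (intro exI[of _ l2] exI[of _ r2]) auto
    next
      case False
      have lt: "l2 < e+2" using False v unfolding valid_def by auto
      have "inT l2 (e+2-1)" using q(4)[OF lt] .
      moreover have "e+2-1 = e+1" by simp
      ultimately have "inT l2 (e+1)" by metis
      have "l2 \<noteq> a+1"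
      proof
        assume "l2 = a+1"
        with \<open>inT l2 (e+1)\<close> have "inT (a+1) (e+1)" by simp
        with v \<open>a \<le> n-1\<close> show False unfolding valid_def by simp
      qed
      hence "l2 \<le> a" using False by simp
      moreover have "a \<le> e+1" using v unfolding valid_def by simp
      ultimately have "r \<le> e+1" using lr(5)[of l2 "e+1"] \<open>inT l2 (e+1)\<close> by simp
      thus ?thesis using r2 by simp
    qed
  qed
next
  case False
  hence an: "a = n" using v unfolding valid_def by simp
  have "e \<noteq> 2*n-2" using v an H4 unfolding valid_def by auto
  hence "e \<le> 2*n-3" using v unfolding valid_def by simp
  have u: "2 \<le> e+2-n" "e+2-n \<le> n-1" using v an \<open>e \<le> 2*n-3\<close> unfolding valid_def by auto
  have u1: "1 \<le> e+2-n" using u by simp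
  obtain l r where q: "inT l r" "l \<le> e+2-n" "e+2-n \<le> r" "l < e+2-n \<Longrightarrow> inT l (e+2-n-1)"
      using node[OF u1 u(2)] by metis
  show ?thesis
  proof (cases "l \<ge> 2")
    case True
    thus ?thesis using q an unfolding RDm_def by (intro exI[of _ l] exI[of _ r]) auto
  next
    case False
    hence "l = 1" using H1[OF q(1)] by simp
    hence "inT 1 (e+2-n-1)" using q u by auto
    moreover have "e+2-n-1 = e+1-n" by simp
    ultimately have "inT 1 (e+1-n)" by metis
    thus ?thesis using v an unfolding valid_def by simp
  qed
qed

definition u :: "int \<Rightarrow> int \<Rightarrow> int" where
  "u a e = (if e \<le> n-3 then e+2 else e+2-n)"

lemma D1:
  assumes "valid a e" "valid a' e'" "\<forall>x y. inT x y \<longrightarrow> (RTm a e x y \<longleftrightarrow> RTm a' e' x y)"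
    "inT x0 y0" "RTm a e x0 y0"
  shows "a = a'"
proof -
  have a: "1 \<le> a" "a \<le> n-1" using H1[OF assms(4)] assms(5) unfolding RTm_def by auto
  obtain l r where lr: "inT l r" "l \<le> a" "a \<le> r" "l < a \<Longrightarrow> inT l (a-1)" "a < r \<Longrightarrow> inT (a+1) r"
    "\<And>x y. inT x y \<Longrightarrow> x \<le> a \<Longrightarrow> a \<le> y \<Longrightarrow> x \<le> l \<and> r \<le> y"
    using node[OF a] by metis
  have "r \<le> e" using lr(6)[OF assms(4)] assms(5) unfolding RTm_def by auto
  hence "RTm a e l r" using lr unfolding RTm_def by auto
  hence Y: "RTm a' e' l r" using assms(3) lr(1) by blast
  show ?thesis
  proof (rule ccontr)
    assume "a \<noteq> a'"
    then consider "a < a'" | "a' < a" by linarith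
    thus False
    proof cases
      case 1
      hence i: "inT (a+1) r" using lr(5) Y unfolding RTm_def by auto
      have "RTm a' e' (a+1) r" using Y 1 unfolding RTm_def by auto
      hence "RTm a e (a+1) r" using assms(3) i by blast
      thus False unfolding RTm_def by simp
    next
      case 2
      hence i: "inT l (a-1)" using lr(4) Y unfolding RTm_def by auto
      have "RTm a' e' l (a-1)" using Y 2 lr(3) unfolding RTm_def by auto
      hence "RTm a e l (a-1)" using assms(3) i by blast
      thus False unfolding RTm_def by simp
    qed
  qed
qed

lemma RDf':
  assumes "valid a e" "inT x y" "RDm n a e x y"
  shows "x \<le> u a e \<and> u a e \<le> y \<and> (\<forall>x' y'. x \<le> x' \<longrightarrow> x' \<le> u a e \<longrightarrow> u a e \<le> y' \<longrightarrow> RDm n a e x' y')"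
proof -
  have b: "1 \<le> x" "x \<le> y" "y \<le> n-1" using H1[OF assms(2)] by auto
  have v: "1 \<le> a" "a \<le> n" "a \<le> e" "e \<le> 2*n-2" using assms(1) unfolding valid_def by auto
  show ?thesis
  proof (cases "e \<le> n-3")
    case True
    hence uu: "u a e = e+2" by (simp add: u_def)
    have r: "a \<le> x-2 \<and> x-2 \<le> e \<and> e \<le> y-2" using assms(3) b v True unfolding RDm_def by linarith
    show ?thesis unfolding uu RDm_def using r by auto
  next
    case False
    hence uu: "u a e = e+2-n" by (simp add: u_def)
    have r: "a \<le> x-2+n \<and> x-2+n \<le> e \<and> e \<le> y-2+n" using assms(3) b v False unfolding RDm_def by linarith
    show ?thesis unfolding uu RDm_def using r b v by auto
  qed
qed

lemma RDf:
  assumes "valid a e" "inT x y" "RDm n a e x y"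
  shows "x \<le> u a e \<and> u a e \<le> y" "\<And>x' y'. x \<le> x' \<Longrightarrow> x' \<le> u a e \<Longrightarrow> u a e \<le> y' \<Longrightarrow> RDm n a e x' y'"
  using RDf'[OF assms] by auto

lemma validD: "valid a e \<Longrightarrow> 1 \<le> a \<and> a \<le> n \<and> a \<le> e \<and> e \<le> 2*n-2"
  unfolding valid_def by auto

lemma D2:
  assumes X: "valid a e" and Y: "valid a' e'" and eq: "\<forall>x y. inT x y \<longrightarrow> (RDm n a e x y \<longleftrightarrow> RDm n a' e' x y)"
    and x0: "inT x0 y0" "RDm n a e x0 y0"
  shows "u a e = u a' e'"
proof -
  define p where "p = u a e"
  define q where "q = u a' e'"
  have p: "1 \<le> p" "p \<le> n-1" using RDf(1)[OF X x0] H1[OF x0(1)] unfolding p_def by auto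
  obtain l r where lr: "inT l r" "l \<le> p" "p \<le> r" "l < p \<Longrightarrow> inT l (p-1)" "p < r \<Longrightarrow> inT (p+1) r"
    "\<And>x y. inT x y \<Longrightarrow> x \<le> p \<Longrightarrow> p \<le> y \<Longrightarrow> x \<le> l \<and> r \<le> y"
    using node[OF p] by metis
  have "x0 \<le> l" using lr(6)[OF x0(1)] RDf(1)[OF X x0] unfolding p_def by auto
  hence "RDm n a e l r" using RDf(2)[OF X x0, of l r] lr unfolding p_def by auto
  hence lrY: "RDm n a' e' l r" using eq lr(1) by blast
  have qlr: "l \<le> q" "q \<le> r" using RDf(1)[OF Y lr(1) lrY] unfolding q_def by auto
  show ?thesis unfolding p_def[symmetric] q_def[symmetric]
  proof (rule ccontr)
    assume "p \<noteq> q"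
    then consider "p < q" | "q < p" by linarith
    thus False
    proof cases
      case 1
      hence i: "inT (p+1) r" using lr(5) qlr by auto
      have "RDm n a' e' (p+1) r" using RDf(2)[OF Y lr(1) lrY, of "p+1" r] 1 lr qlr unfolding q_def by auto
      hence "RDm n a e (p+1) r" using eq i by blast
      thus False using RDf(1)[OF X i] unfolding p_def by simp
    next
      case 2
      hence i: "inT l (p-1)" using lr(4) qlr by auto
      have "RDm n a' e' l (p-1)" using RDf(2)[OF Y lr(1) lrY, of l "p-1"] 2 qlr unfolding q_def by auto
      hence "RDm n a e l (p-1)" using eq i by blast
      thus False using RDf(1)[OF X i] unfolding p_def by simp
    qed
  qed
qed

lemma caseii:
  assumes X: "valid a e" and Y: "valid a e'" and lt: "e < e'" and an: "a \<le> n-1"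
    and eq: "\<forall>x y. inT x y \<longrightarrow> (RTm a e x y \<longleftrightarrow> RTm a e' x y)"
    and noRD: "\<forall>x y. inT x y \<longrightarrow> \<not> RDm n a e x y"
  shows False
proof -
  have e1: "e \<le> n-2"
  proof (rule ccontr)
    assume "\<not> e \<le> n-2"
    hence "e \<le> 2*n-3" using lt Y unfolding valid_def by auto
    hence p: "1 \<le> e+2-n" "e+2-n \<le> n-1" using \<open>\<not> e \<le> n-2\<close> X unfolding valid_def by auto
    obtain l r where lr: "inT l r" "l \<le> e+2-n" "e+2-n \<le> r" using node[OF p] by metis
    have "RDm n a e l r" using lr H1[OF lr(1)] an unfolding RDm_def by auto
    thus False using noRD lr(1) by blast
  qed
  have e2: "e' \<le> n-2"
  proof (rule ccontr)
    assume "\<not> e' \<le> n-2"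
    hence "RTm a e' 1 (n-1)" using X an unfolding valid_def RTm_def by auto
    hence "RTm a e 1 (n-1)" using eq H4 by blast
    thus False using e1 unfolding RTm_def by simp
  qed
  have p: "1 \<le> e+2" "e+2 \<le> n-1" using X e1 e2 lt unfolding valid_def by auto
  obtain l r where lr: "inT l r" "l \<le> e+2" "e+2 \<le> r" "l < e+2 \<Longrightarrow> inT l (e+2-1)"
    using node[OF p] by metis
  have "\<not> RDm n a e l r" using noRD lr(1) by blast
  hence l1: "l \<le> a+1" using lr unfolding RDm_def by auto
  hence "inT l (e+2-1)" using lr(4) X unfolding valid_def by auto
  moreover have "e+2-1 = e+1" by simp
  ultimately have i: "inT l (e+1)" by metis
  have "l \<noteq> a+1"
  proof
    assume "l = a+1"
    with i have "inT (a+1) (e+1)" by simp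
    with X an show False unfolding valid_def by simp
  qed
  hence "RTm a e' l (e+1)" using l1 lt X unfolding RTm_def valid_def by auto
  hence "RTm a e l (e+1)" using eq i by blast
  thus False unfolding RTm_def by simp
qed

lemma caseiiia:
  assumes X: "valid a e" and Y: "valid a' e'" and ee: "e' = e+n"
    and noRTX: "\<forall>x y. inT x y \<longrightarrow> \<not> RTm a e x y"
    and noRTY: "\<forall>x y. inT x y \<longrightarrow> \<not> RTm a' e' x y"
    and eq: "\<forall>x y. inT x y \<longrightarrow> (RDm n a e x y \<longleftrightarrow> RDm n a' e' x y)"
    and x0: "inT x0 y0" "RDm n a e x0 y0"
  shows False
proof -
  have "1 \<le> u a e" "u a e \<le> n-1" using RDf(1)[OF X x0] H1[OF x0(1)] by auto
  hence e3: "e \<le> n-3" using ee validD[OF Y] unfolding u_def by (cases "e \<le> n-3") auto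
  have an': "a' = n"
  proof (rule ccontr)
    assume "a' \<noteq> n"
    hence "RTm a' e' 1 (n-1)" using Y ee X unfolding valid_def RTm_def by auto
    thus False using noRTY H4 by blast
  qed
  have a: "1 \<le> a" "a \<le> n-1" using X e3 unfolding valid_def by auto
  obtain l r where lr: "inT l r" "l \<le> a" "a \<le> r" "a < r \<Longrightarrow> inT (a+1) r"
    using node[OF a] by metis
  have "\<not> RTm a e l r" using noRTX lr(1) by blast
  hence r1: "r \<ge> e+1" using lr unfolding RTm_def by auto
  have "r \<noteq> e+1"
  proof
    assume "r = e+1"
    hence "inT (a+1) (e+1)" using lr(4) X unfolding valid_def by auto
    thus False using X a unfolding valid_def by simp
  qed
  hence r2: "r \<ge> e+2" using r1 by simp
  have i: "inT (a+1) r" using lr(4) r2 X unfolding valid_def by auto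
  have "RDm n a' e' (a+1) r" using an' ee a r2 X unfolding RDm_def valid_def by auto
  hence "RDm n a e (a+1) r" using eq i by blast
  thus False using e3 a unfolding RDm_def by auto
qed

lemma caseiiib:
  assumes X: "valid a e" and Y: "valid a' e" and lt: "a < a'"
    and noRTX: "\<forall>x y. inT x y \<longrightarrow> \<not> RTm a e x y"
    and noRTY: "\<forall>x y. inT x y \<longrightarrow> \<not> RTm a' e x y"
    and eq: "\<forall>x y. inT x y \<longrightarrow> (RDm n a e x y \<longleftrightarrow> RDm n a' e x y)"
    and x0: "inT x0 y0" "RDm n a e x0 y0"
  shows False
proof -
  have an: "a \<le> n-1" using lt Y unfolding valid_def by auto
  have e1: "e \<le> n-2"
  proof (rule ccontr)
    assume "\<not> e \<le> n-2"
    hence "RTm a e 1 (n-1)" using X an unfolding valid_def RTm_def by auto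
    thus False using noRTX H4 by blast
  qed
  have "1 \<le> u a e" "u a e \<le> n-1" using RDf(1)[OF X x0] H1[OF x0(1)] by auto
  hence e3: "e \<le> n-3" using e1 unfolding u_def by (cases "e \<le> n-3") auto
  have a: "1 \<le> a'" "a' \<le> n-1" using Y e3 unfolding valid_def by auto
  obtain l r where lr: "inT l r" "l \<le> a'" "a' \<le> r" "a' < r \<Longrightarrow> inT (a'+1) r"
    using node[OF a] by metis
  have "\<not> RTm a' e l r" using noRTY lr(1) by blast
  hence r1: "r \<ge> e+1" using lr unfolding RTm_def by auto
  have "r \<noteq> e+1"
  proof
    assume "r = e+1"
    hence "inT (a'+1) (e+1)" using lr(4) Y unfolding valid_def by auto
    thus False using Y a unfolding valid_def by simp
  qed
  hence r2: "r \<ge> e+2" using r1 by simp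
  have i: "inT (a'+1) r" using lr(4) r2 Y unfolding valid_def by auto
  have "RDm n a e (a'+1) r" using lt r2 Y unfolding RDm_def valid_def by auto
  hence "RDm n a' e (a'+1) r" using eq i by blast
  thus False using e3 a unfolding RDm_def by auto
qed

lemma mainA:
  assumes X: "valid a e" and Y: "valid a' e'"
    and eqT: "\<forall>x y. inT x y \<longrightarrow> (RTm a e x y \<longleftrightarrow> RTm a' e' x y)"
    and eqD: "\<forall>x y. inT x y \<longrightarrow> (RDm n a e x y \<longleftrightarrow> RDm n a' e' x y)"
  shows "a = a' \<and> e = e'"
proof (cases "\<exists>x y. inT x y \<and> RTm a e x y")
  case True
  then obtain x0 y0 where x0: "inT x0 y0" "RTm a e x0 y0" by blast
  have aa: "a = a'" using D1[OF X Y eqT x0] .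
  have an: "a \<le> n-1" using x0 H1[OF x0(1)] unfolding RTm_def by auto
  show ?thesis
  proof (cases "\<exists>x y. inT x y \<and> RDm n a e x y")
    case True
    then obtain x1 y1 where x1: "inT x1 y1" "RDm n a e x1 y1" by blast
    have uu: "u a e = u a' e'" using D2[OF X Y eqD x1] .
    have "RTm a e 1 (n-1) \<longleftrightarrow> RTm a' e' 1 (n-1)" using eqT H4 by blast
    hence "e = e'" using uu aa an validD[OF X] validD[OF Y] unfolding u_def RTm_def by (cases "e \<le> n-3"; cases "e' \<le> n-3") auto
    thus ?thesis using aa by simp
  next
    case False
    hence nX: "\<forall>x y. inT x y \<longrightarrow> \<not> RDm n a e x y" by blast
    hence nY: "\<forall>x y. inT x y \<longrightarrow> \<not> RDm n a e' x y" using eqD aa by blast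
    have "e = e'"
    proof (rule ccontr)
      assume "e \<noteq> e'"
      then consider "e < e'" | "e' < e" by linarith
      thus False
      proof cases
        case 1 show False using caseii[OF X Y[folded aa] 1 an] eqT nX aa by blast
      next
        case 2 show False using caseii[OF Y[folded aa] X 2 an] eqT nY aa by blast
      qed
    qed
    thus ?thesis using aa by simp
  qed
next
  case False
  hence nX: "\<forall>x y. inT x y \<longrightarrow> \<not> RTm a e x y" by blast
  hence nY: "\<forall>x y. inT x y \<longrightarrow> \<not> RTm a' e' x y" using eqT by blast
  obtain x1 y1 where x1: "inT x1 y1" "RDm n a e x1 y1" using nonempty[OF X] nX by blast
  have x1': "RDm n a' e' x1 y1" using eqD x1 by blast
  have uu: "u a e = u a' e'" using D2[OF X Y eqD x1] .
  have eqD': "\<forall>x y. inT x y \<longrightarrow> (RDm n a' e' x y \<longleftrightarrow> RDm n a e x y)" using eqD by blast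
  have "e' = e+n \<or> e = e'+n \<or> e = e'" using uu unfolding u_def by (cases "e \<le> n-3"; cases "e' \<le> n-3") auto
  moreover have "e' \<noteq> e+n" using caseiiia[OF X Y _ nX nY eqD x1] by blast
  moreover have "e \<noteq> e'+n" using caseiiia[OF Y X _ nY nX eqD' x1(1) x1'] by blast
  ultimately have ee: "e = e'" by blast
  have "a = a'"
  proof (rule ccontr)
    assume "a \<noteq> a'"
    then consider "a < a'" | "a' < a" by linarith
    thus False
    proof cases
      case 1 show False using caseiiib[OF X Y[folded ee] 1 nX nY[folded ee] eqD[folded ee] x1] by blast
    next
      case 2 show False using caseiiib[OF Y[folded ee] X 2 nY[folded ee] nX eqD'[folded ee] x1(1) x1'[folded ee]] by blast
    qed
  qed
  thus ?thesis using ee by simp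
qed

end


lemma m1mod: "(n::int) \<ge> 2 \<Longrightarrow> (-1) mod n = n - 1"
  by (simp add: zmod_minus1)

lemma tau_fst: "(n::int) \<ge> 2 \<Longrightarrow> 1 \<le> c \<Longrightarrow> c \<le> n \<Longrightarrow> tau n (c,d) = ((if c = 1 then n else c - 1), d)"
  unfolding tau_def using m1mod[of n] by (auto simp: mod_pos_pos_trivial)

lemma cong_small: "[(p::int) = q] (mod n) \<Longrightarrow> n > 0 \<Longrightarrow> \<bar>p - q\<bar> < n \<Longrightarrow> p = q"
proof -
  assume c: "[p = q] (mod n)" and n: "n > 0" and b: "\<bar>p - q\<bar> < n"
  have "n dvd (p - q)" using c by (simp add: cong_iff_dvd_diff)
  show "p = q"
  proof (rule ccontr)
    assume "p \<noteq> q"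
    hence "\<bar>n\<bar> \<le> \<bar>p - q\<bar>" using \<open>n dvd (p - q)\<close> dvd_imp_le_int by simp
    thus False using b n by simp
  qed
qed

lemma cong_two: "[(p::int) = q] (mod n) \<Longrightarrow> n > 0 \<Longrightarrow> - n < p - q \<Longrightarrow> p - q < 2*n \<Longrightarrow> p = q \<or> p = q + n"
proof -
  assume c: "[p = q] (mod n)" and n: "n > 0" and b: "- n < p - q" "p - q < 2*n"
  have "n dvd (p - q)" using c by (simp add: cong_iff_dvd_diff)
  then obtain k where k: "p - q = n * k" by (auto simp: dvd_def)
  have "n * (-1) < n * k" using b k by linarith
  hence "-1 < k" using n by (metis mult_less_cancel_left_pos)
  have "n * k < n * 2" using b k by linarith
  hence "k < 2" using n by (metis mult_less_cancel_left_pos)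
  hence "k = 0 \<or> k = 1" using \<open>-1 < k\<close> by auto
  thus ?thesis using k by auto
qed

lemma homT_cong: "[a = a'] (mod n) \<Longrightarrow> [c = c'] (mod n) \<Longrightarrow> homT n (a,b) (c,d) = homT n (a',b) (c',d)"
  unfolding homT_def apply simp
  by (meson cong_add_rcancel cong_sym cong_trans cong_add)

lemma tau_cong: "[fst (tau n (c,d)) = c - 1] (mod n)" "snd (tau n (c,d)) = d"
  unfolding tau_def cong_def by (simp_all add: mod_add_left_eq)


lemma tau2_cong: "[fst (tau n (tau n (c,d))) = c - 2] (mod n)" "snd (tau n (tau n (c,d))) = d"
proof -
  obtain f where f: "tau n (c,d) = (f, d)" "[f = c - 1] (mod n)" using tau_cong[of n c d]
    by (metis prod.collapse)
  have "[fst (tau n (f,d)) = f - 1] (mod n)" by (rule tau_cong)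
  moreover have "[f - 1 = c - 2] (mod n)" using f(2) cong_diff[OF f(2) cong_refl[of 1]] by simp
  ultimately show "[fst (tau n (tau n (c,d))) = c - 2] (mod n)" using f(1) cong_trans by metis
  show "snd (tau n (tau n (c,d))) = d" by (simp add: tau_def)
qed

lemma homT_wing:
  assumes "(n::int) \<ge> 2" "1 \<le> x" "x \<le> y" "y \<le> n-1" "1 \<le> a" "a \<le> n"
  shows "homT n (x, y-x+1) (a,b) \<longleftrightarrow> RTm a (a+b-1) x y"
proof
  assume "homT n (x, y-x+1) (a,b)"
  then obtain s where s: "0 \<le> s" "s < y-x+1" "[x + s = a] (mod n)" "y-x+1-s \<le> b"
    unfolding homT_def by auto
  have "x + s = a" using cong_small[OF s(3)] assms s by simp
  thus "RTm a (a+b-1) x y" using s unfolding RTm_def by simp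
next
  assume "RTm a (a+b-1) x y"
  thus "homT n (x, y-x+1) (a,b)" unfolding homT_def RTm_def
    by (intro exI[of _ "a - x"]) auto
qed

lemma homT_pair: "homT n P (c, d) \<longleftrightarrow> homT n (fst P, snd P) (c,d)" by simp

lemma homD_wing:
  assumes "(n::int) \<ge> 2" "1 \<le> x" "x \<le> y" "y \<le> n-1" "1 \<le> a" "a \<le> n" "a+b-1 \<le> 2*n-2"
  shows "homD n (x, y-x+1) (a,b) \<longleftrightarrow> RDm n a (a+b-1) x y"
proof -
  define t where "t = tau n (tau n (x, y-x+1))"
  have t: "t = (fst t, y-x+1)" "[fst t = x - 2] (mod n)" using tau2_cong[of n x "y-x+1"] unfolding t_def
    by (metis prod.collapse) (rule tau2_cong)
  have "homD n (x, y-x+1) (a,b) \<longleftrightarrow> homT n (a,b) (x-2, y-x+1)"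
    unfolding homD_def t_def[symmetric] by (subst t(1), rule homT_cong[OF cong_refl t(2)])
  also have "\<dots> \<longleftrightarrow> RDm n a (a+b-1) x y"
  proof
    assume "homT n (a,b) (x-2, y-x+1)"
    then obtain s where s: "0 \<le> s" "s < b" "[a + s = x-2] (mod n)" "b-s \<le> y-x+1"
      unfolding homT_def by auto
    have "a + s = x-2 \<or> a + s = x-2+n" using cong_two[OF s(3)] assms s by simp
    thus "RDm n a (a+b-1) x y" using s unfolding RDm_def by auto
  next
    assume r: "RDm n a (a+b-1) x y"
    show "homT n (a,b) (x-2, y-x+1)"
    proof (cases "a \<le> x-2 \<and> x-2 \<le> a+b-1 \<and> a+b-1 \<le> y-2")
      case True
      thus ?thesis unfolding homT_def by (intro exI[of _ "x-2-a"]) auto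
    next
      case False
      hence r2: "a \<le> x-2+n \<and> x-2+n \<le> a+b-1 \<and> a+b-1 \<le> y-2+n" using r unfolding RDm_def by blast
      have ee: "a + (x-2+n-a) = (x-2) + n" by simp
      have "[a + (x-2+n-a) = x-2] (mod n)" unfolding ee cong_def by simp
      thus ?thesis using r2 unfolding homT_def by (intro exI[of _ "x-2+n-a"]) auto
    qed
  qed
  finally show ?thesis .
qed


lemma Twing:
  assumes n: "(n::int) \<ge> 2" and TS: "T \<subseteq> ind_objs n" and rig: "rigid n T" and T1: "(1, n-1) \<in> T"
    and Z: "(c,d) \<in> T"
  shows "1 \<le> c \<and> 1 \<le> d \<and> c + d \<le> n"
proof -
  have cd: "1 \<le> c" "c \<le> n" "1 \<le> d" using Z TS unfolding ind_objs_def by auto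
  have d: "d \<le> n-1"
  proof (rule ccontr)
    assume "\<not> d \<le> n-1"
    have cc: "c + (n-1) = (c-1) + n" by simp
    have "[c + (n-1) = fst (tau n (c,d))] (mod n)"
      using tau_fst[OF n cd(1,2), of d] unfolding cc by (auto simp: cong_def)
    hence "homT n (c,d) (tau n (c,d))" using \<open>\<not> d \<le> n-1\<close> n unfolding homT_def
      by (intro exI[of _ "n-1"]) (auto simp: tau_def)
    hence "ext1C n (c,d) (c,d)" unfolding ext1C_def by simp
    thus False using rig Z unfolding rigid_def by blast
  qed
  have "c + d \<le> n"
  proof (rule ccontr)
    assume a: "\<not> c + d \<le> n"
    have t: "tau n (1, n-1) = (n, n-1)" using tau_fst[OF n, of 1 "n-1"] n by simp
    have "homT n (c,d) (tau n (1,n-1))" unfolding t homT_def using a d cd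
      by (intro exI[of _ "n-c"]) auto
    hence "ext1C n (c,d) (1,n-1)" unfolding ext1C_def by simp
    thus False using rig Z T1 unfolding rigid_def by blast
  qed
  thus ?thesis using cd by simp
qed

lemma cross_ext:
  assumes n: "(n::int) \<ge> 2" and w: "1 \<le> x" "x \<le> y" "y \<le> n-1" "1 \<le> x'" "x' \<le> y'" "y' \<le> n-1"
    and c: "x < x' \<and> x' \<le> y+1 \<and> y+1 \<le> y'"
  shows "ext1C n (x, y-x+1) (x', y'-x'+1)"
proof -
  have t: "tau n (x', y'-x'+1) = (x'-1, y'-x'+1)" using tau_fst[OF n, of x' "y'-x'+1"] w c by simp
  have "homT n (x, y-x+1) (tau n (x', y'-x'+1))" unfolding t homT_def using c
    by (intro exI[of _ "x'-1-x"]) auto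
  thus ?thesis unfolding ext1C_def by simp
qed

lemma ext_cross:
  assumes n: "(n::int) \<ge> 2" and w: "1 \<le> x" "x \<le> y" "y \<le> n-1" "1 \<le> x'" "x' \<le> y'" "y' \<le> n-1"
    and e: "ext1C n (x, y-x+1) (x', y'-x'+1)"
  shows "(x < x' \<and> x' \<le> y+1 \<and> y+1 \<le> y') \<or> (x' < x \<and> x \<le> y'+1 \<and> y'+1 \<le> y)"
proof -
  obtain f where f: "tau n (x', y'-x'+1) = (f, y'-x'+1)" "[f = x' - 1] (mod n)"
    using tau_cong[of n x' "y'-x'+1"] by (metis prod.collapse)
  obtain g where g: "tau n (tau n (x, y-x+1)) = (g, y-x+1)" "[g = x - 2] (mod n)"
    using tau2_cong[of n x "y-x+1"] by (metis prod.collapse)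
  have "homT n (x, y-x+1) (tau n (x', y'-x'+1)) \<or> homT n (tau n (x', y'-x'+1)) (tau n (tau n (x, y-x+1)))"
    using e unfolding ext1C_def homD_def by simp
  hence "homT n (x, y-x+1) (x'-1, y'-x'+1) \<or> homT n (x'-1, y'-x'+1) (x-2, y-x+1)"
    unfolding f(1) g(1) using homT_cong[OF cong_refl f(2)] homT_cong[OF f(2) g(2)] by simp
  thus ?thesis
  proof
    assume "homT n (x, y-x+1) (x'-1, y'-x'+1)"
    then obtain s where s: "0 \<le> s" "s < y-x+1" "[x + s = x'-1] (mod n)" "y-x+1-s \<le> y'-x'+1"
      unfolding homT_def by auto
    have "x + s = x'-1" using cong_small[OF s(3)] n w s by simp
    thus ?thesis using s by auto
  next
    assume "homT n (x'-1, y'-x'+1) (x-2, y-x+1)"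
    then obtain s where s: "0 \<le> s" "s < y'-x'+1" "[x'-1 + s = x-2] (mod n)" "y'-x'+1-s \<le> y-x+1"
      unfolding homT_def by auto
    have "x'-1 + s = x-2" using cong_small[OF s(3)] n w s by simp
    thus ?thesis using s by auto
  qed
qed

theorem lemma4p5:
  fixes n :: int and T :: "ind set" and X Y :: ind
  assumes "n \<ge> 2"
    and "basic_maximal_rigid n T"
    and "(1, n - 1) \<in> T"
    and "X \<in> F_objs n" and "Y \<in> F_objs n"
    and "X \<notin> tau n ` T" and "Y \<notin> tau n ` T"
    and "sigma_vertices T RT n X = sigma_vertices T RT n Y"
    and "sigma_vertices T RD n X = sigma_vertices T RD n Y"
  shows "X = Y"
proof -
  note n = assms(1)
  have TS: "T \<subseteq> ind_objs n" and rig: "rigid n T"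
    and mx: "\<And>Z. Z \<in> ind_objs n \<Longrightarrow> rigid n (insert Z T) \<Longrightarrow> Z \<in> T"
    using assms(2) unfolding basic_maximal_rigid_def by auto
  note T1 = assms(3)
  define inT where "inT x y \<longleftrightarrow> (x, y-x+1) \<in> T" for x y
  have H1: "1 \<le> x \<and> x \<le> y \<and> y \<le> n-1" if "inT x y" for x y
    using Twing[OF n TS rig T1, of x "y-x+1"] that unfolding inT_def by auto
  have Tform: "\<exists>x y. Z = (x, y-x+1) \<and> inT x y" if "Z \<in> T" for Z
  proof -
    obtain c d where "Z = (c,d)" by (cases Z)
    thus ?thesis using that unfolding inT_def by (intro exI[of _ c] exI[of _ "c+d-1"]) auto
  qed
  interpret tr n inT
  proof
    show "2 \<le> n" by (rule n)
    fix x y assume "inT x y" thus "1 \<le> x \<and> x \<le> y \<and> y \<le> n-1" by (rule H1)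
  next
    fix x y x' y' assume h: "inT x y" "inT x' y'"
    show "\<not> (x < x' \<and> x' \<le> y+1 \<and> y+1 \<le> y')"
    proof
      assume c: "x < x' \<and> x' \<le> y+1 \<and> y+1 \<le> y'"
      have "ext1C n (x, y-x+1) (x', y'-x'+1)" using cross_ext[OF n _ _ _ _ _ _ c] H1[OF h(1)] H1[OF h(2)] by auto
      thus False using rig h unfolding rigid_def inT_def by blast
    qed
  next
    fix x y assume w: "1 \<le> x" "x \<le> y" "y \<le> n-1"
      and nc: "\<And>x' y'. inT x' y' \<Longrightarrow> \<not>(x < x' \<and> x' \<le> y+1 \<and> y+1 \<le> y') \<and> \<not>(x' < x \<and> x \<le> y'+1 \<and> y'+1 \<le> y)"
    have "rigid n (insert (x, y-x+1) T)"
      unfolding rigid_def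
    proof (intro ballI)
      fix P Q assume P: "P \<in> insert (x, y-x+1) T" and Q: "Q \<in> insert (x, y-x+1) T"
      obtain p1 p2 where p: "P = (p1, p2-p1+1)" "p1 = x \<and> p2 = y \<or> inT p1 p2"
        using P Tform by (metis add_diff_cancel insert_iff diff_add_cancel)
      obtain q1 q2 where q: "Q = (q1, q2-q1+1)" "q1 = x \<and> q2 = y \<or> inT q1 q2"
        using Q Tform by (metis add_diff_cancel insert_iff diff_add_cancel)
      show "\<not> ext1C n P Q"
      proof (cases "inT p1 p2 \<and> inT q1 q2")
        case True thus ?thesis using rig p q unfolding rigid_def inT_def by blast
      next
        case False
        have wp: "1 \<le> p1" "p1 \<le> p2" "p2 \<le> n-1" using p(2) w H1 by auto
        have wq: "1 \<le> q1" "q1 \<le> q2" "q2 \<le> n-1" using q(2) w H1 by auto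
        show ?thesis
        proof
          assume "ext1C n P Q"
          hence cr: "(p1 < q1 \<and> q1 \<le> p2+1 \<and> p2+1 \<le> q2) \<or> (q1 < p1 \<and> p1 \<le> q2+1 \<and> q2+1 \<le> p2)"
            using ext_cross[OF n wp wq] p(1) q(1) by simp
          show False
          proof (cases "p1 = x \<and> p2 = y")
            case True
            show False
            proof (cases "q1 = x \<and> q2 = y")
              case True thus False using cr \<open>p1 = x \<and> p2 = y\<close> by auto
            next
              case False thus False using q(2) nc[of q1 q2] cr \<open>p1 = x \<and> p2 = y\<close> by auto
            qed
          next
            case pF: False
            hence "inT p1 p2" using p(2) by blast
            hence "q1 = x \<and> q2 = y" using \<open>\<not> (inT p1 p2 \<and> inT q1 q2)\<close> q(2) by auto
            thus False using nc[OF \<open>inT p1 p2\<close>] cr by auto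
          qed
        qed
      qed
    qed
    moreover have "(x, y-x+1) \<in> ind_objs n" using w unfolding ind_objs_def by auto
    ultimately show "inT x y" using mx unfolding inT_def by blast
  next
    show "inT 1 (n-1)" using T1 unfolding inT_def by simp
  qed
  obtain a b where X: "X = (a,b)" by (cases X)
  obtain a' b' where Y: "Y = (a',b')" by (cases Y)
  have Xr: "1 \<le> a" "a \<le> n" "1 \<le> b" "a+b-1 \<le> 2*n-2" using assms(4) X unfolding F_objs_def ind_objs_def by auto
  have Yr: "1 \<le> a'" "a' \<le> n" "1 \<le> b'" "a'+b'-1 \<le> 2*n-2" using assms(5) Y unfolding F_objs_def ind_objs_def by auto
  have vgen: "valid a (a+b-1)" if r: "1 \<le> a" "a \<le> n" "1 \<le> b" "a+b-1 \<le> 2*n-2" and nt: "(a,b) \<notin> tau n ` T" for a b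
  proof -
    have "\<not> inT (a+1) (a+b-1+1)" if "a \<le> n-1"
    proof
      assume "inT (a+1) (a+b-1+1)"
      hence "(a+1, b) \<in> T" unfolding inT_def by simp
      moreover have "tau n (a+1, b) = (a,b)" using tau_fst[OF n, of "a+1" b] r that by simp
      ultimately show False using nt by force
    qed
    moreover have "\<not> inT 1 (a+b-1+1-n)" if "a = n"
    proof
      assume "inT 1 (a+b-1+1-n)"
      hence "(1, b) \<in> T" unfolding inT_def using that by simp
      moreover have "tau n (1, b) = (a,b)" using tau_fst[OF n, of 1 b] n that by simp
      ultimately show False using nt by force
    qed
    ultimately show ?thesis using r unfolding valid_def by auto
  qed
  have vX: "valid a (a+b-1)" using vgen[OF Xr] assms(6) X by simp
  have vY: "valid a' (a'+b'-1)" using vgen[OF Yr] assms(7) Y by simp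
  have memT: "homT n Z X \<longleftrightarrow> homT n Z Y" if "Z \<in> T" for Z
    using assms(8) that TS unfolding sigma_vertices_def RT_def by blast
  have memD: "homD n Z X \<longleftrightarrow> homD n Z Y" if "Z \<in> T" for Z
    using assms(9) that TS unfolding sigma_vertices_def RD_def by blast
  have eqT: "\<forall>x y. inT x y \<longrightarrow> (RTm a (a+b-1) x y \<longleftrightarrow> RTm a' (a'+b'-1) x y)"
  proof (intro allI impI)
    fix x y assume i: "inT x y"
    note h = H1[OF i]
    show "RTm a (a+b-1) x y \<longleftrightarrow> RTm a' (a'+b'-1) x y"
      using memT[of "(x, y-x+1)"] i homT_wing[OF n _ _ _ Xr(1,2), of x y b] homT_wing[OF n _ _ _ Yr(1,2), of x y b'] h
      unfolding inT_def X Y by simp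
  qed
  have eqD: "\<forall>x y. inT x y \<longrightarrow> (RDm n a (a+b-1) x y \<longleftrightarrow> RDm n a' (a'+b'-1) x y)"
  proof (intro allI impI)
    fix x y assume i: "inT x y"
    note h = H1[OF i]
    show "RDm n a (a+b-1) x y \<longleftrightarrow> RDm n a' (a'+b'-1) x y"
      using memD[of "(x, y-x+1)"] i homD_wing[OF n _ _ _ Xr(1,2) Xr(4), of x y] homD_wing[OF n _ _ _ Yr(1,2) Yr(4), of x y] h
      unfolding inT_def X Y by simp
  qed
  have "a = a' \<and> a+b-1 = a'+b'-1" using mainA[OF vX vY eqT eqD] .
  thus ?thesis using X Y by simp
qed

end
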